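(* Let $A$ be a real $2\times 2$ matrix and $B$ a real $1\times 2$ matrix, and let $\mathrm{NT}=\{\vec{x}\in\mathbb{R}^2 : BA^k\vec{x}>0 \text{ for all } k\in\mathbb{N}\}$. Then $\mathrm{NT}$ is one of the following: (1) the empty set; (2) a ray from the origin, i.e. a set $\{k\vec{v}: k>0\}$ for some nonzero $\vec{v}\in\mathbb{R}^2$; (3) a sector between two rays starting from the origin, i.e. a convex set with nonempty interior satisfying $k\,\mathrm{NT}\subseteq \mathrm{NT}$ for all $k>0$.
   Context: We consider the homogeneous simple linear loop "while $(B\vec{x}>0)$ $\{\vec{x}:=A\vec{x}\}$" with program variables $\vec{x}\in\mathbb{R}^2$. Its non-termination set $\mathrm{NT}$ is the set of inputs on which the loop never terminates, namely $\mathrm{NT}=\{\vec{x}\in\mathbb{R}^2 : BA^k\vec{x}>0 \text{ for all integers } k\ge 0\}$. It is known (and may be used) that $\mathrm{NT}$ is convex. *)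

theory Defs
  imports "HOL-Analysis.Analysis"
begin

text \<open>Matrix power A^k for square real matrices.\<close>
primrec mat_pow :: "real^'n^'n \<Rightarrow> nat \<Rightarrow> real^'n^'n" where
  "mat_pow A 0 = mat 1"
| "mat_pow A (Suc k) = A ** mat_pow A k"

text \<open>Non-termination set of the loop while (B x > 0) x := A x.
  B x > 0 is meant componentwise (B has a single row here).\<close>
definition NT :: "real^2^2 \<Rightarrow> real^2^1 \<Rightarrow> (real^2) set" where
  "NT A B = {x. \<forall>k::nat. \<forall>i. ((B ** mat_pow A k) *v x) $ i > 0}"

end

theory Submission
  imports Defs
begin

lemma parallel2:
  fixes a x v :: "real^2"
  assumes "a \<noteq> 0" "a \<bullet> x = 0" "a \<bullet> v = 0" "v \<noteq> 0"
  shows "\<exists>c. x = c *\<^sub>R v"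
proof -
  have ax: "a$1 * x$1 + a$2 * x$2 = 0" and av: "a$1 * v$1 + a$2 * v$2 = 0"
    using assms(2,3) by (simp_all add: inner_vec_def sum_2)
  have a: "a$1 \<noteq> 0 \<or> a$2 \<noteq> 0" using assms(1) by (auto simp: vec_eq_iff forall_2)
  have v: "v$1 \<noteq> 0 \<or> v$2 \<noteq> 0" using assms(4) by (auto simp: vec_eq_iff forall_2)
  have det: "x$1 * v$2 - x$2 * v$1 = 0"
  proof (cases "a$1 = 0")
    case True
    then have "a$2 \<noteq> 0" using a by simp
    then have "x$2 = 0" "v$2 = 0" using ax av True by auto
    then show ?thesis by simp
  next
    case False
    have "x$1 = - a$2 * x$2 / a$1" "v$1 = - a$2 * v$2 / a$1"
      using ax av False by (simp_all add: field_simps eq_neg_iff_add_eq_0 add.commute mult.commute)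
    then show ?thesis by (simp add: field_simps)
  qed
  show ?thesis
  proof (cases "v$1 = 0")
    case True
    then have "v$2 \<noteq> 0" using v by simp
    then have "x = (x$2 / v$2) *\<^sub>R v" using det True
      by (auto simp: vec_eq_iff forall_2 field_simps)
    then show ?thesis by blast
  next
    case False
    then have "x = (x$1 / v$1) *\<^sub>R v" using det
      by (auto simp: vec_eq_iff forall_2 field_simps)
    then show ?thesis by blast
  qed
qed

lemma cone_ray:
  fixes S :: "(real^2) set"
  assumes cvx: "convex S" and int: "interior S = {}" and z: "0 \<notin> S"
    and cone: "\<forall>k::real. k > 0 \<longrightarrow> ((*\<^sub>R) k) ` S \<subseteq> S"
    and v: "v \<in> S"
  shows "S = {k *\<^sub>R v | k. k > 0}"
proof -
  have cone': "k *\<^sub>R y \<in> S" if "k > 0" "y \<in> S" for k y using cone that by blast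
  obtain a b where a: "a \<noteq> 0" "S \<subseteq> {x. a \<bullet> x = b}"
    using empty_interior_subset_hyperplane[OF cvx int] by blast
  have "a \<bullet> v = b" "a \<bullet> (2 *\<^sub>R v) = b" using a v cone'[of 2 v] by auto
  then have b0: "b = 0" by simp
  have v0: "v \<noteq> 0" using v z by auto
  show ?thesis
  proof
    show "{k *\<^sub>R v | k. k > 0} \<subseteq> S" using cone' v by blast
  next
    show "S \<subseteq> {k *\<^sub>R v | k. k > 0}"
    proof
      fix x assume x: "x \<in> S"
      have "a \<bullet> x = 0" "a \<bullet> v = 0" using a x v b0 by auto
      then obtain c where c: "x = c *\<^sub>R v" using parallel2[OF a(1) _ _ v0] by blast
      have "c > 0"
      proof (rule ccontr)
        assume "\<not> c > 0"
        then have cle: "c \<le> 0" by simp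
        show False
        proof (cases "c = 0")
          case True then show ?thesis using x c z by simp
        next
          case False
          then have cn: "c < 0" using cle by simp
          define t where "t = - c / (1 - c)"
          have t: "0 \<le> t" "t \<le> 1" using cn by (auto simp: t_def field_simps)
          have "t *\<^sub>R v + (1 - t) *\<^sub>R x \<in> S"
            by (rule convexD[OF cvx v x]) (use t in auto)
          moreover have "t *\<^sub>R v + (1 - t) *\<^sub>R x = 0"
          proof -
            have "t + (1 - t) * c = 0" using cn by (simp add: t_def field_simps)
            then show ?thesis by (simp add: c scaleR_add_left[symmetric] del: scaleR_add_left)
          qed
          ultimately show False using z by simp
        qed
      qed
      then show "x \<in> {k *\<^sub>R v | k. k > 0}" using c by blast
    qed
  qed
qed

theorem proposition2:
  fixes A :: "real^2^2" and B :: "real^2^1"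
  shows "NT A B = {}
    \<or> (\<exists>v::real^2. v \<noteq> 0 \<and> NT A B = {k *\<^sub>R v | k. k > 0})
    \<or> (convex (NT A B) \<and> interior (NT A B) \<noteq> {}
        \<and> (\<forall>k::real. k > 0 \<longrightarrow> ((*\<^sub>R) k) ` NT A B \<subseteq> NT A B))"
proof -
  let ?S = "NT A B"
  have cvx: "convex ?S"
  proof (rule convexI)
    fix x y :: "real^2" and u v :: real
    assume h0: "x \<in> ?S" "y \<in> ?S" "0 \<le> u" "0 \<le> v" "u + v = 1"
    then have h: "\<forall>k i. 0 < (B ** mat_pow A k *v x) $ i" "\<forall>k i. 0 < (B ** mat_pow A k *v y) $ i"
      "0 \<le> u" "0 \<le> v" "u + v = 1" unfolding NT_def by auto
    show "u *\<^sub>R x + v *\<^sub>R y \<in> ?S" unfolding NT_def mem_Collect_eq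
    proof (intro allI)
    fix k i
    let ?M = "B ** mat_pow A k"
    have e: "(?M *v (u *\<^sub>R x + v *\<^sub>R y)) $ i = u * (?M *v x) $ i + v * (?M *v y) $ i"
      by (simp add: matrix_vector_right_distrib matrix_vector_mult_scaleR)
    have "0 < u \<or> 0 < v" using h by auto
    then show "0 < (?M *v (u *\<^sub>R x + v *\<^sub>R y)) $ i"
      unfolding e using h(1,2)[rule_format, of k i] h(3,4)
      by (smt (verit) mult_nonneg_nonneg mult_pos_pos)
    qed
  qed
  have cone: "\<forall>k::real. k > 0 \<longrightarrow> ((*\<^sub>R) k) ` ?S \<subseteq> ?S"
    unfolding NT_def by (auto simp: matrix_vector_mult_scaleR)
  have z: "0 \<notin> ?S" unfolding NT_def by auto
  show ?thesis
  proof (cases "?S = {}")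
    case False
    then obtain v where v: "v \<in> ?S" by blast
    show ?thesis
    proof (cases "interior ?S = {}")
      case True
      have "v \<noteq> 0" using v z by auto
      then show ?thesis using cone_ray[OF cvx True z cone v] by blast
    next
      case False
      then show ?thesis using cvx cone by simp
    qed
  qed simp
qed

end
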